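(* Let $m,n\ge 0$ and $k=m+n+1$. Let $f\colon X\to Y$ be a large scale uniform function of metric spaces with coarseness control function $c_f$, and suppose $\operatorname{asdim}(Y)\le n$. If $f$ admits an $(m,k)$-dimensional control function $D_f$, then $\operatorname{asdim}(X)\le m+n$. Moreover, if $c_f$, some $n$-dimensional control function of $Y$, and $D_f$ can all be chosen linear (respectively, all dilations), then $X$ has a $(k-1)$-dimensional control function that is linear (respectively, a dilation).
   Context: For a metric space $X$ and $r>0$, an $r$-chain is a finite sequence $x_1,\dots,x_j$ with $d(x_i,x_{i+1})\le r$; the $r$-components of $A\subset X$ are the equivalence classes of points of $A$ under "joined by an $r$-chain lying in $A$". A set is $R$-bounded if its diameter is $\le R$. A family is $r$-disjoint if points in different members are at distance $\ge r$. An $n$-dimensional control function of $X$ is $D_X\colon\mathbb R_+\to\mathbb R_+$ such that for every $r>0$ there are $r$-disjoint families $\mathcal U_1,\dots,\mathcal U_{n+1}$ with members of diameter $\le D_X(r)$ whose union covers $X$; $\operatorname{asdim}(X)\le n$ iff such a function exists. $f\colon X\to Y$ is large scale uniform with coarseness control function $c_f\colon\mathbb R_+\to\mathbb R_+$ if $d_X(x,y)\le r\Rightarrow d_Y(f(x),f(y))\le c_f(r)$. Given $k\ge m+1\ge1$, an $(m,k)$-dimensional control function of $f$ is $D_f\colon\mathbb R_+\times\mathbb R_+\to\mathbb R_+$ such that for all $r_X,R_Y>0$ every $A\subset X$ with $\operatorname{diam} f(A)\le R_Y$ can be written as $A=A_1\cup\dots\cup A_k$ where the $r_X$-components of each $A_i$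 are $D_f(r_X,R_Y)$-bounded and every $x\in A$ belongs to at least $k-m$ of the sets $A_i$. A one-variable function is linear if of the form $r\mapsto cr+b$ ($b,c\ge0$), a dilation if of the form $r\mapsto cr$ ($c>0$); a two-variable function is linear if of the form $(r,R)\mapsto ar+bR+c$ and a dilation if of the form $(r,R)\mapsto ar+bR$. *)

theory Defs
  imports "HOL-Analysis.Analysis"
begin

definition R_bounded :: "'a::metric_space set \<Rightarrow> real \<Rightarrow> bool" where
  "R_bounded S R \<longleftrightarrow> (\<forall>x\<in>S. \<forall>y\<in>S. dist x y \<le> R)"

definition r_chain_in :: "'a::metric_space set \<Rightarrow> real \<Rightarrow> 'a list \<Rightarrow> bool" where
  "r_chain_in A r xs \<longleftrightarrow> xs \<noteq> [] \<and> set xs \<subseteq> A \<and>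
     (\<forall>i. Suc i < length xs \<longrightarrow> dist (xs ! i) (xs ! Suc i) \<le> r)"

definition r_joined :: "'a::metric_space set \<Rightarrow> real \<Rightarrow> 'a \<Rightarrow> 'a \<Rightarrow> bool" where
  "r_joined A r x y \<longleftrightarrow> (\<exists>xs. r_chain_in A r xs \<and> hd xs = x \<and> last xs = y)"

definition r_component :: "'a::metric_space set \<Rightarrow> real \<Rightarrow> 'a \<Rightarrow> 'a set" where
  "r_component A r x = {y \<in> A. r_joined A r x y}"

definition r_components :: "'a::metric_space set \<Rightarrow> real \<Rightarrow> 'a set set" where
  "r_components A r = r_component A r ` A"

definition r_disjoint :: "'a::metric_space set set \<Rightarrow> real \<Rightarrow> bool" where
  "r_disjoint \<U> r \<longleftrightarrow> (\<forall>U\<in>\<U>. \<forall>V\<in>\<U>. U \<noteq> V \<longrightarrow> (\<forall>x\<in>U. \<forall>y\<in>V. r \<le> dist x y))"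

definition dim_control_function :: "'a::metric_space set \<Rightarrow> nat \<Rightarrow> (real \<Rightarrow> real) \<Rightarrow> bool" where
  "dim_control_function X n D \<longleftrightarrow>
     (\<forall>r>0. 0 \<le> D r) \<and>
     (\<forall>r>0. \<exists>\<U> :: nat \<Rightarrow> 'a set set.
        (\<forall>i<Suc n. r_disjoint (\<U> i) r \<and> (\<forall>U\<in>\<U> i. U \<subseteq> X \<and> R_bounded U (D r))) \<and>
        X \<subseteq> (\<Union>i<Suc n. \<Union>(\<U> i)))"

definition asdim_le :: "'a::metric_space set \<Rightarrow> nat \<Rightarrow> bool" where
  "asdim_le X n \<longleftrightarrow> (\<exists>D. dim_control_function X n D)"

definition large_scale_uniform ::
  "('a::metric_space \<Rightarrow> 'b::metric_space) \<Rightarrow> (real \<Rightarrow> real) \<Rightarrow> bool" where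
  "large_scale_uniform f c \<longleftrightarrow> (\<forall>r>0. 0 \<le> c r) \<and>
     (\<forall>r>0. \<forall>x y. dist x y \<le> r \<longrightarrow> dist (f x) (f y) \<le> c r)"

definition map_control_function ::
  "('a::metric_space \<Rightarrow> 'b::metric_space) \<Rightarrow> nat \<Rightarrow> nat \<Rightarrow> (real \<Rightarrow> real \<Rightarrow> real) \<Rightarrow> bool" where
  "map_control_function f m k D \<longleftrightarrow>
     (\<forall>r>0. \<forall>R>0. 0 \<le> D r R) \<and>
     (\<forall>r>0. \<forall>R>0. \<forall>A. R_bounded (f ` A) R \<longrightarrow>
        (\<exists>As :: nat \<Rightarrow> 'a set.
           A = (\<Union>i<k. As i) \<and>
           (\<forall>i<k. \<forall>C\<in>r_components (As i) r. R_bounded C (D r R)) \<and>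
           (\<forall>x\<in>A. k - m \<le> card {i. i < k \<and> x \<in> As i})))"

definition linear_fun1 :: "(real \<Rightarrow> real) \<Rightarrow> bool" where
  "linear_fun1 D \<longleftrightarrow> (\<exists>c b. 0 \<le> b \<and> 0 \<le> c \<and> (\<forall>r>0. D r = c * r + b))"

definition dilation_fun1 :: "(real \<Rightarrow> real) \<Rightarrow> bool" where
  "dilation_fun1 D \<longleftrightarrow> (\<exists>c>0. \<forall>r>0. D r = c * r)"

definition linear_fun2 :: "(real \<Rightarrow> real \<Rightarrow> real) \<Rightarrow> bool" where
  "linear_fun2 D \<longleftrightarrow> (\<exists>a b c. 0 \<le> a \<and> 0 \<le> b \<and> 0 \<le> c \<and>
      (\<forall>r>0. \<forall>R>0. D r R = a * r + b * R + c))"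

definition dilation_fun2 :: "(real \<Rightarrow> real \<Rightarrow> real) \<Rightarrow> bool" where
  "dilation_fun2 D \<longleftrightarrow> (\<exists>a b. 0 \<le> a \<and> 0 \<le> b \<and> (\<forall>r>0. \<forall>R>0. D r R = a * r + b * R))"

end

theory Submission
  imports Defs
begin


definition rstep :: "'a::metric_space set \<Rightarrow> real \<Rightarrow> 'a \<Rightarrow> 'a \<Rightarrow> bool" where
  "rstep A r p q \<longleftrightarrow> p \<in> A \<and> q \<in> A \<and> dist p q \<le> r"

lemma chain_single: "r_chain_in A r [a] \<longleftrightarrow> a \<in> A"
  unfolding r_chain_in_def by auto

lemma chain_Cons2: "r_chain_in A r (a # b # xs) \<longleftrightarrow> a \<in> A \<and> dist a b \<le> r \<and> r_chain_in A r (b # xs)"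
proof
  assume h: "r_chain_in A r (a # b # xs)"
  have "dist a b \<le> r" using h unfolding r_chain_in_def by (metis length_Cons nth_Cons_0 nth_Cons_Suc zero_less_Suc Suc_less_eq)
  moreover have "\<forall>i. Suc i < length (b#xs) \<longrightarrow> dist ((b#xs) ! i) ((b#xs) ! Suc i) \<le> r"
  proof (intro allI impI)
    fix i assume "Suc i < length (b#xs)"
    then have "Suc (Suc i) < length (a#b#xs)" by simp
    then have "dist ((a#b#xs) ! Suc i) ((a#b#xs) ! Suc (Suc i)) \<le> r" using h unfolding r_chain_in_def by blast
    then show "dist ((b#xs) ! i) ((b#xs) ! Suc i) \<le> r" by simp
  qed
  ultimately show "a \<in> A \<and> dist a b \<le> r \<and> r_chain_in A r (b # xs)" using h unfolding r_chain_in_def by auto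
next
  assume h: "a \<in> A \<and> dist a b \<le> r \<and> r_chain_in A r (b # xs)"
  have "\<forall>i. Suc i < length (a#b#xs) \<longrightarrow> dist ((a#b#xs) ! i) ((a#b#xs) ! Suc i) \<le> r"
  proof (intro allI impI)
    fix i assume i: "Suc i < length (a#b#xs)"
    show "dist ((a#b#xs) ! i) ((a#b#xs) ! Suc i) \<le> r"
    proof (cases i)
      case 0 then show ?thesis using h by simp
    next
      case (Suc j)
      then have "Suc j < length (b#xs)" using i by simp
      then have "dist ((b#xs) ! j) ((b#xs) ! Suc j) \<le> r" using h unfolding r_chain_in_def by blast
      then show ?thesis using Suc by simp
    qed
  qed
  then show "r_chain_in A r (a # b # xs)" using h unfolding r_chain_in_def by auto
qed

lemma joined_iff: "r_joined A r x y \<longleftrightarrow> x \<in> A \<and> (rstep A r)\<^sup>*\<^sup>* x y"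
proof
  assume "r_joined A r x y"
  then obtain xs where xs: "r_chain_in A r xs" "hd xs = x" "last xs = y" unfolding r_joined_def by blast
  have "\<And>x. r_chain_in A r xs \<Longrightarrow> hd xs = x \<Longrightarrow> last xs = y \<Longrightarrow> x \<in> A \<and> (rstep A r)\<^sup>*\<^sup>* x y"
  proof (induction xs)
    case Nil then show ?case by (simp add: r_chain_in_def)
  next
    case (Cons a xs)
    show ?case
    proof (cases xs)
      case Nil then show ?thesis using Cons.prems by (simp add: chain_single)
    next
      case (Cons b zs)
      have cc: "r_chain_in A r (a # b # zs)" using Cons.prems(1) \<open>xs = b # zs\<close> by simp
      have c: "a \<in> A" "dist a b \<le> r" "r_chain_in A r (b # zs)" using cc unfolding chain_Cons2 by auto
      have "b \<in> A \<and> (rstep A r)\<^sup>*\<^sup>* b y" using Cons.IH[of b] c(3) Cons.prems Cons by simp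
      moreover have "rstep A r a b" using c \<open>b \<in> A \<and> _\<close> by (simp add: rstep_def)
      ultimately show ?thesis using c Cons.prems
        by (auto intro: converse_rtranclp_into_rtranclp)
    qed
  qed
  then show "x \<in> A \<and> (rstep A r)\<^sup>*\<^sup>* x y" using xs by blast
next
  assume h: "x \<in> A \<and> (rstep A r)\<^sup>*\<^sup>* x y"
  have "y \<in> A \<longrightarrow> (\<exists>xs. r_chain_in A r xs \<and> hd xs = x \<and> last xs = y)" using h[THEN conjunct2]
  proof (induction rule: converse_rtranclp_induct)
    case base then show ?case by (auto intro!: exI[of _ "[y]"] simp: chain_single)
  next
    case (step x z)
    show ?case
    proof
      assume "y \<in> A"
      then obtain zs where zs: "r_chain_in A r zs" "hd zs = z" "last zs = y" using step by blast
      then obtain rest where "zs = z # rest" by (cases zs) (auto simp: r_chain_in_def)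
      then have "r_chain_in A r (x # zs) \<and> hd (x # zs) = x \<and> last (x # zs) = y"
        using zs step(1) by (simp add: chain_Cons2 rstep_def)
      then show "\<exists>xs. r_chain_in A r xs \<and> hd xs = x \<and> last xs = y" by blast
    qed
  qed
  moreover have "y \<in> A" using h by (metis rtranclp.cases rstep_def)
  ultimately show "r_joined A r x y" unfolding r_joined_def by blast
qed

lemma joined_in: "r_joined A r x y \<Longrightarrow> x \<in> A \<and> y \<in> A"
  using joined_iff by (metis rtranclp.cases rstep_def)

lemma joined_refl: "x \<in> A \<Longrightarrow> r_joined A r x x"
  by (simp add: joined_iff)

lemma joined_snoc: "r_joined A r x y \<Longrightarrow> z \<in> A \<Longrightarrow> dist y z \<le> r \<Longrightarrow> r_joined A r x z"
  using joined_in[of A r x y] by (auto simp: joined_iff rstep_def intro: rtranclp.rtrancl_into_rtrancl)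

lemma joined_trans: "r_joined A r x y \<Longrightarrow> r_joined A r y z \<Longrightarrow> r_joined A r x z"
  by (auto simp: joined_iff)

lemma joined_sym: "r_joined A r x y \<Longrightarrow> r_joined A r y x"
proof -
  assume h: "r_joined A r x y"
  have "(rstep A r)\<^sup>*\<^sup>* x y" using h by (simp add: joined_iff)
  then have "(rstep A r)\<^sup>*\<^sup>* y x"
  proof (induction rule: rtranclp_induct)
    case base then show ?case by simp
  next
    case (step y z)
    have "rstep A r z y" using step(2) by (auto simp: rstep_def dist_commute)
    then show ?case using step(3) by (rule converse_rtranclp_into_rtranclp)
  qed
  then show ?thesis using joined_in[OF h] by (simp add: joined_iff)
qed

lemma joined_induct:
  assumes "r_joined A r x y" "P x"
    "\<And>p q. P p \<Longrightarrow> p \<in> A \<Longrightarrow> q \<in> A \<Longrightarrow> dist p q \<le> r \<Longrightarrow> P q"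
  shows "P y"
proof -
  have "(rstep A r)\<^sup>*\<^sup>* x y" using assms(1) by (simp add: joined_iff)
  then show ?thesis
    by (induction rule: rtranclp_induct) (auto simp: rstep_def assms(2,3))
qed

lemma joined_mono: "r_joined A r x y \<Longrightarrow> A \<subseteq> B \<Longrightarrow> r \<le> r' \<Longrightarrow> r_joined B r' x y"
proof -
  assume h: "r_joined A r x y" and AB: "A \<subseteq> B" and rr: "r \<le> r'"
  have "r_joined B r' x x" using joined_in[OF h] AB by (auto intro: joined_refl)
  show ?thesis
    by (rule joined_induct[OF h, where P="\<lambda>p. r_joined B r' x p"])
       (use \<open>r_joined B r' x x\<close> AB rr in \<open>auto intro: joined_snoc\<close>)
qed

lemma comp_mem: "y \<in> r_component A r x \<longleftrightarrow> y \<in> A \<and> r_joined A r x y"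
  by (simp add: r_component_def)

lemma comp_self: "x \<in> A \<Longrightarrow> x \<in> r_component A r x"
  by (simp add: comp_mem joined_refl)

lemma comp_eq: "y \<in> r_component A r a \<Longrightarrow> y \<in> r_component A r b \<Longrightarrow> r_component A r a = r_component A r b"
proof -
  assume ya: "y \<in> r_component A r a" and yb: "y \<in> r_component A r b"
  have "r_joined A r a y" "r_joined A r b y" using ya yb by (auto simp: comp_mem)
  then have ab: "r_joined A r a b" "r_joined A r b a" by (meson joined_sym joined_trans)+
  show ?thesis unfolding r_component_def using ab by (auto intro: joined_trans)
qed

lemma components_disjoint: "r_disjoint (r_components A r) r"
  unfolding r_disjoint_def
proof (intro ballI impI)
  fix U V x y assume U: "U \<in> r_components A r" and V: "V \<in> r_components A r" and ne: "U \<noteq> V"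
    and x: "x \<in> U" and y: "y \<in> V"
  obtain a where a: "U = r_component A r a" using U unfolding r_components_def by blast
  obtain b where b: "V = r_component A r b" using V unfolding r_components_def by blast
  show "r \<le> dist x y"
  proof (rule ccontr)
    assume "\<not> r \<le> dist x y"
    then have "dist x y \<le> r" by simp
    moreover have "y \<in> A" using y b by (simp add: comp_mem)
    ultimately have "y \<in> r_component A r a" using x a by (auto simp: comp_mem intro: joined_snoc)
    then have "U = V" using a b y comp_eq by blast
    then show False using ne by simp
  qed
qed



lemma comp_bounded_pair:
  assumes "\<forall>C\<in>r_components L r. R_bounded C B" "r_joined L r q p"
  shows "dist q p \<le> B"
proof -
  have q: "q \<in> L" using joined_in[OF assms(2)] by simp
  have "r_component L r q \<in> r_components L r" using q by (simp add: r_components_def)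
  moreover have "q \<in> r_component L r q" "p \<in> r_component L r q"
    using q assms(2) joined_in[OF assms(2)] by (auto simp: comp_mem joined_refl)
  ultimately show ?thesis using assms(1) unfolding R_bounded_def by blast
qed

lemma step_bound:
  fixes f :: "'a::metric_space \<Rightarrow> 'b::metric_space"
  assumes unif: "\<And>x x'. dist x x' \<le> r \<Longrightarrow> dist (f x) (f x') \<le> cr"
  and w: "cr < w" and w0: "0 < w" and wb: "w \<le> \<beta>" and Sb: "2*(\<beta> + w) \<le> S"
  and disj: "r_disjoint \<V> S"
  and GV: "\<And>V. V\<in>\<V> \<Longrightarrow> G V \<subseteq> f -` V"
  and Gb: "\<And>V. V\<in>\<V> \<Longrightarrow> \<forall>C\<in>r_components (G V) \<rho>. R_bounded C D"
  and Lb: "\<forall>C\<in>r_components L r. R_bounded C B"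
  and B0: "0 \<le> B" and D0: "0 \<le> D" and r0: "0 \<le> r" and \<rho>: "B + 2*r \<le> \<rho>"
  and Sh: "Sh = {x. \<exists>V\<in>\<V>. (\<forall>v\<in>V. \<beta> \<le> dist (f x) v) \<and> (\<exists>v\<in>V. dist (f x) v < \<beta> + w)}"
  and U: "U = (\<Union>V\<in>\<V>. G V)"
  and Ob: "Ob = U \<union> (L - Sh)"
  shows "\<forall>C \<in> r_components Ob r. R_bounded C (D + 2*B + 2*r)"
proof
  fix C assume "C \<in> r_components Ob r"
  then obtain x0 where x0: "x0 \<in> Ob" "C = r_component Ob r x0" unfolding r_components_def by blast
  have Vsep: "V = V'" if "V \<in> \<V>" "V' \<in> \<V>" "v \<in> V" "v' \<in> V'" "dist v v' < S" for V V' v v'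
    using disj that unfolding r_disjoint_def by (meson not_le)
  have zone: "V = V'" if "V \<in> \<V>" "V' \<in> \<V>" "v \<in> V" "v' \<in> V'" "dist y v < \<beta>" "dist y v' < \<beta>" for V V' v v' y
  proof -
    have "dist v v' \<le> dist y v + dist y v'" using dist_triangle[of v v' y] dist_commute[of v y] by linarith
    then have "dist v v' < S" using that Sb w0 wb by argo
    then show ?thesis using Vsep that by blast
  qed
  have cr0: "0 \<le> cr" using unif[of x0 x0] r0 by simp
  show "R_bounded C (D + 2*B + 2*r)"
  proof (cases "C \<inter> U = {}")
    case True
    have "p \<in> C \<and> r_joined L r x0 p" if "p \<in> C" for p
    proof -
      have jp: "r_joined Ob r x0 p" using that x0 by (simp add: comp_mem)
      have x0L: "x0 \<in> L" using True x0 Ob comp_self[of x0 Ob r] by auto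
      show ?thesis
      proof (rule joined_induct[OF jp, where P="\<lambda>p. p \<in> C \<and> r_joined L r x0 p"])
        show "x0 \<in> C \<and> r_joined L r x0 x0" using x0 x0L by (simp add: comp_self joined_refl)
      next
        fix p q assume "p \<in> C \<and> r_joined L r x0 p" "p \<in> Ob" "q \<in> Ob" "dist p q \<le> r"
        moreover then have "q \<in> C" using x0 by (auto simp: comp_mem intro: joined_snoc)
        moreover then have "q \<in> L" using True Ob \<open>q \<in> Ob\<close> by auto
        ultimately show "q \<in> C \<and> r_joined L r x0 q" by (auto intro: joined_snoc)
      qed
    qed
    then have "dist p q \<le> B" if "p \<in> C" "q \<in> C" for p q
    proof -
      have "dist x0 p \<le> B" "dist x0 q \<le> B" using that \<open>\<And>p. p \<in> C \<Longrightarrow> _\<close> comp_bounded_pair[OF Lb] by blast+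
      moreover have "r_joined L r p q"
        using that \<open>\<And>p. p \<in> C \<Longrightarrow> _\<close> by (meson joined_sym joined_trans)
      ultimately show ?thesis using comp_bounded_pair[OF Lb] by blast
    qed
    moreover have "B \<le> D + 2*B + 2*r" using B0 D0 r0 by linarith
    ultimately show ?thesis unfolding R_bounded_def by force
  next
    case False
    then obtain u0 where u0: "u0 \<in> C" "u0 \<in> U" by blast
    then obtain V0 where V0: "V0 \<in> \<V>" "u0 \<in> G V0" using U by blast
    define K where "K = r_component (G V0) \<rho> u0"
    have KG: "K \<subseteq> G V0" unfolding K_def r_component_def by blast
    have Kb: "R_bounded K D" using Gb[OF V0(1)] V0(2) unfolding K_def r_components_def by blast
    let ?inside = "\<lambda>V p. \<exists>v\<in>V. dist (f p) v < \<beta>"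
    define P where "P = (\<lambda>p. (p \<in> U \<longrightarrow> p \<in> K) \<and> (p \<notin> U \<longrightarrow> p \<in> L - Sh \<and> ?inside V0 p \<and>
        (\<exists>u\<in>K. \<exists>q. dist u q \<le> r \<and> r_joined (L - Sh) r q p)))"
    have addK: "p' \<in> K" if "u \<in> K" "p' \<in> G V0" "dist u p' \<le> \<rho>" for u p'
      using that unfolding K_def comp_mem by (auto intro: joined_snoc)
    have inside_near: "?inside V0 p'" if "p \<in> K" "dist p p' \<le> r" for p p'
    proof -
      have "f p \<in> V0" using that KG GV[OF V0(1)] by auto
      moreover have "dist (f p') (f p) \<le> cr" using unif[of p' p] that by (simp add: dist_commute)
      ultimately have "dist (f p') (f p) < \<beta>" using w wb by linarith
      then show ?thesis using \<open>f p \<in> V0\<close> by blast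
    qed
    have Pstep: "P q" if "P p" "p \<in> Ob" "q \<in> Ob" "dist p q \<le> r" for p q
    proof (cases "p \<in> U")
      case pU: True
      then have pK: "p \<in> K" using that P_def by blast
      show ?thesis
      proof (cases "q \<in> U")
        case True
        then obtain V' where V': "V' \<in> \<V>" "q \<in> G V'" using U by blast
        have "f p \<in> V0" "f q \<in> V'" using pK KG GV V0(1) V' by blast+
        moreover have "dist (f p) (f q) < S" using unif[OF that(4)] w w0 wb Sb by argo
        ultimately have "V0 = V'" using Vsep[OF V0(1) V'(1)] by blast
        then have "V' = V0" by simp
        then have "q \<in> K" using addK[OF pK] V' that(4) \<rho> B0 r0 by auto
        then show ?thesis unfolding P_def using True by blast
      next
        case False
        then have "q \<in> L - Sh" using that Ob by blast
        moreover have "?inside V0 q" using inside_near pK that(4) by blast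
        moreover have "r_joined (L - Sh) r q q" using \<open>q \<in> L - Sh\<close> by (rule joined_refl)
        ultimately show ?thesis unfolding P_def using False pK that(4) by blast
      qed
    next
      case pU: False
      then have pL: "p \<in> L - Sh" and pin: "?inside V0 p"
        and "\<exists>u\<in>K. \<exists>q. dist u q \<le> r \<and> r_joined (L - Sh) r q p" using that P_def by blast+
      then obtain u q0 where uq: "u \<in> K" "dist u q0 \<le> r" "r_joined (L - Sh) r q0 p" by blast
      show ?thesis
      proof (cases "q \<in> U")
        case True
        then obtain V' where V': "V' \<in> \<V>" "q \<in> G V'" using U by blast
        have "?inside V' p"
        proof -
          have "f q \<in> V'" using V' GV by blast
          moreover have "dist (f p) (f q) \<le> cr" using unif[OF that(4)] .
          moreover have "dist (f p) (f q) < \<beta>" using calculation(2) w wb by linarith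
          ultimately show ?thesis by blast
        qed
        then obtain v' where v': "v' \<in> V'" "dist (f p) v' < \<beta>" by blast
        obtain v where v: "v \<in> V0" "dist (f p) v < \<beta>" using pin by blast
        have "V' = V0" using zone[OF V'(1) V0(1) v'(1) v(1) v'(2) v(2)] .
        have "dist q0 p \<le> B" using comp_bounded_pair[OF Lb] joined_mono[OF uq(3), of L r] by blast
        then have "dist u q \<le> \<rho>" using uq(2) that(4) \<rho> dist_triangle[of u q q0] dist_triangle[of q0 q p] by linarith
        then have "q \<in> K" using addK[OF uq(1)] V' \<open>V' = V0\<close> by auto
        then show ?thesis unfolding P_def using True by blast
      next
        case False
        then have qL: "q \<in> L - Sh" using that Ob by blast
        obtain v where v: "v \<in> V0" "dist (f p) v < \<beta>" using pin by blast
        have "dist (f q) v \<le> dist (f q) (f p) + dist (f p) v" by (rule dist_triangle)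
        moreover have "dist (f q) (f p) \<le> cr" using unif[of q p] that(4) by (simp add: dist_commute)
        ultimately have "dist (f q) v < \<beta> + w" using v w by linarith
        then have "?inside V0 q" using qL Sh V0(1) v(1) by (auto simp: not_le)
        moreover have "r_joined (L - Sh) r q0 q" using uq(3) qL that(4) by (rule joined_snoc)
        ultimately show ?thesis unfolding P_def using False qL uq(1,2) by blast
      qed
    qed
    have u0K: "u0 \<in> K" unfolding K_def using V0(2) by (rule comp_self)
    have near: "\<exists>u\<in>K. dist y u \<le> B + r" if "y \<in> C" for y
    proof -
      have "r_joined Ob r x0 u0" "r_joined Ob r x0 y" using u0 that x0 by (auto simp: comp_mem)
      then have j: "r_joined Ob r u0 y" by (meson joined_sym joined_trans)
      have "P u0" unfolding P_def using u0K u0(2) by blast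
      have "P y" by (rule joined_induct[OF j, where P=P]) (use \<open>P u0\<close> Pstep in auto)
      show ?thesis
      proof (cases "y \<in> U")
        case True then have "y \<in> K" using \<open>P y\<close> P_def by blast
        moreover have "dist y y \<le> B + r" using B0 r0 by simp
        ultimately show ?thesis by blast
      next
        case False
        then obtain u q where uq: "u \<in> K" "dist u q \<le> r" "r_joined (L - Sh) r q y" using \<open>P y\<close> P_def by blast
        have "dist q y \<le> B" using comp_bounded_pair[OF Lb] joined_mono[OF uq(3), of L r] by blast
        then have "dist y u \<le> B + r" using uq(2) dist_triangle[of y u q] by (simp add: dist_commute)
        then show ?thesis using uq(1) by blast
      qed
    qed
    show ?thesis unfolding R_bounded_def
    proof (intro ballI)
      fix y z assume "y \<in> C" "z \<in> C"
      then obtain u u' where "u \<in> K" "dist y u \<le> B + r" "u' \<in> K" "dist z u' \<le> B + r" using near by blast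
      moreover then have "dist u u' \<le> D" using Kb unfolding R_bounded_def by blast
      moreover have "dist y z \<le> dist y u + dist u z" by (rule dist_triangle)
      moreover have "dist u z \<le> dist u u' + dist u' z" by (rule dist_triangle)
      moreover have "dist u' z = dist z u'" by (rule dist_commute)
      ultimately show "dist y z \<le> D + 2*B + 2*r" by linarith
    qed
  qed
qed



definition Sfun :: "(real \<Rightarrow> real) \<Rightarrow> nat \<Rightarrow> real \<Rightarrow> real" where
  "Sfun c k r = 2 * (real k + 1) * (c r + r)"

definition Rfun :: "(real \<Rightarrow> real) \<Rightarrow> (real \<Rightarrow> real) \<Rightarrow> nat \<Rightarrow> real \<Rightarrow> real" where
  "Rfun c DY k r = DY (Sfun c k r) + Sfun c k r"

fun Bseq :: "(real \<Rightarrow> real) \<Rightarrow> (real \<Rightarrow> real) \<Rightarrow> (real \<Rightarrow> real \<Rightarrow> real) \<Rightarrow> nat \<Rightarrow> real \<Rightarrow> nat \<Rightarrow> real" where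
  "Bseq c DY D k r 0 = 0"
| "Bseq c DY D k r (Suc s) = D (Bseq c DY D k r s + 2*r) (Rfun c DY k r) + 2 * Bseq c DY D k r s + 2*r"

lemma main_construction:
  fixes f :: "'a::metric_space \<Rightarrow> 'b::metric_space"
  assumes k: "k = m + n + 1"
  and lsu: "large_scale_uniform f c"
  and DY: "dim_control_function (UNIV::'b set) n DY"
  and Df: "map_control_function f m k D"
  shows "dim_control_function (UNIV::'a set) (m+n) (\<lambda>r. Bseq c DY D k r (Suc n))"
proof -
  have Dpos: "\<And>a b. 0 < a \<Longrightarrow> 0 < b \<Longrightarrow> 0 \<le> D a b" using Df unfolding map_control_function_def by blast
  have cpos: "\<And>r. 0 < r \<Longrightarrow> 0 \<le> c r" using lsu unfolding large_scale_uniform_def by blast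
  have DYpos: "\<And>r. 0 < r \<Longrightarrow> 0 \<le> DY r" using DY unfolding dim_control_function_def by blast
  have Spos: "0 < Sfun c k r" if "0 < r" for r
    using cpos[OF that] that unfolding Sfun_def by (simp add: add_pos_nonneg)
  have Rpos: "0 < Rfun c DY k r" if "0 < r" for r
    using Spos[OF that] DYpos[OF Spos[OF that]] unfolding Rfun_def by linarith
  have Bnn: "0 \<le> Bseq c DY D k r s" if "0 < r" for r s
  proof (induction s)
    case 0 then show ?case by simp
  next
    case (Suc s)
    have "0 \<le> D (Bseq c DY D k r s + 2*r) (Rfun c DY k r)"
      using Dpos Suc that Rpos[OF that] by simp
    then show ?case using Suc that by simp
  qed
  show ?thesis unfolding dim_control_function_def
  proof (intro conjI allI impI)
    fix r :: real assume r: "0 < r"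
    show "0 \<le> Bseq c DY D k r (Suc n)" using Bnn[OF r] .
  next
    fix r :: real assume r: "0 < r"
    define cr where "cr = c r"
    define w where "w = cr + r"
    define S where "S = Sfun c k r"
    define R' where "R' = Rfun c DY k r"
    define B where "B = Bseq c DY D k r"
    define \<rho> where "\<rho> = (\<lambda>s. B s + 2*r)"
    define \<beta> where "\<beta> = (\<lambda>c::nat. (real c + 1) * w)"
    have cr0: "0 \<le> cr" using cpos[OF r] cr_def by simp
    have w0: "0 < w" using cr0 r w_def by simp
    have Sw: "S = 2 * (real k + 1) * w" unfolding S_def Sfun_def w_def cr_def by simp
    have S0: "0 < S" using Spos[OF r] S_def by simp
    have R'0: "0 < R'" using Rpos[OF r] R'_def by simp
    have unif: "\<And>x x'. dist x x' \<le> r \<Longrightarrow> dist (f x) (f x') \<le> cr"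
      using lsu r unfolding large_scale_uniform_def cr_def by blast
    have Bnn': "0 \<le> B s" for s using Bnn[OF r] B_def by simp
    have \<rho>0: "0 < \<rho> s" for s using Bnn'[of s] r \<rho>_def by simp
    obtain \<V> :: "nat \<Rightarrow> 'b set set" where
      V1: "\<forall>i<Suc n. r_disjoint (\<V> i) S \<and> (\<forall>U\<in>\<V> i. U \<subseteq> UNIV \<and> R_bounded U (DY S))"
      and V2: "(UNIV::'b set) \<subseteq> (\<Union>i<Suc n. \<Union>(\<V> i))"
      using DY S0 unfolding dim_control_function_def by blast
    have RY: "DY S \<le> R'" using R'_def S_def S0 unfolding Rfun_def by simp
    define spec where "spec = (\<lambda>s V (As :: nat \<Rightarrow> 'a set). f -` V = (\<Union>i<k. As i) \<and>
           (\<forall>i<k. \<forall>C\<in>r_components (As i) (\<rho> s). R_bounded C (D (\<rho> s) R')) \<and>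
           (\<forall>x\<in>f -` V. k - m \<le> card {i. i < k \<and> x \<in> As i}))"
    define Dec where "Dec = (\<lambda>s V. SOME As. spec s V As)"
    have Dec_spec: "spec s V (Dec s V)" if "s < Suc n" "V \<in> \<V> s" for s V
    proof -
      have "R_bounded V (DY S)" using V1 that by blast
      then have "R_bounded (f ` (f -` V)) R'" using RY unfolding R_bounded_def by force
      then have "\<exists>As. spec s V As" using Df \<rho>0[of s] R'0 unfolding map_control_function_def spec_def by blast
      then show ?thesis unfolding Dec_def by (rule someI_ex)
    qed
    define Sh where "Sh = (\<lambda>s c. {x. \<exists>V\<in>\<V> s. (\<forall>v\<in>V. \<beta> c \<le> dist (f x) v) \<and> (\<exists>v\<in>V. dist (f x) v < \<beta> c + w)})"
    define Ob where "Ob = rec_nat (\<lambda>c. {}) (\<lambda>s Os c. (\<Union>V\<in>\<V> s. Dec s V c) \<union> (Os c - Sh s c))"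
    have O0: "Ob 0 c = {}" for c unfolding Ob_def by simp
    have OS: "Ob (Suc s) c = (\<Union>V\<in>\<V> s. Dec s V c) \<union> (Ob s c - Sh s c)" for s c unfolding Ob_def by simp
    have Bsuc: "B (Suc s) = D (\<rho> s) R' + 2 * B s + 2*r" for s
      unfolding B_def \<rho>_def R'_def by simp
    have inv1: "\<forall>c<k. \<forall>C\<in>r_components (Ob s c) r. R_bounded C (B s)" if "s \<le> Suc n" for s
      using that
    proof (induction s)
      case 0 then show ?case by (simp add: O0 r_components_def)
    next
      case (Suc s)
      have sn: "s < Suc n" using Suc.prems by simp
      show ?case
      proof (intro allI impI)
        fix c assume ck: "c < k"
        have "\<forall>C\<in>r_components (Ob (Suc s) c) r. R_bounded C (D (\<rho> s) R' + 2 * B s + 2*r)"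
        proof (rule step_bound[where \<V>="\<V> s" and G="\<lambda>V. Dec s V c" and L="Ob s c" and \<rho>="\<rho> s"
              and \<beta>="\<beta> c" and w=w and S=S and Sh="Sh s c" and U="\<Union>V\<in>\<V> s. Dec s V c"])
          show "\<And>x x'. dist x x' \<le> r \<Longrightarrow> dist (f x) (f x') \<le> cr" by (rule unif)
          show "cr < w" using r w_def by simp
          show "0 < w" by (rule w0)
          show "w \<le> \<beta> c" unfolding \<beta>_def using w0 by simp
          have "real c + 2 \<le> real k + 1" using ck by simp
          then have "(real c + 2) * w \<le> (real k + 1) * w" using w0 by (simp add: mult_right_mono)
          then show "2 * (\<beta> c + w) \<le> S" unfolding \<beta>_def Sw by (simp add: algebra_simps)
          show "r_disjoint (\<V> s) S" using V1 sn by blast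
          show "\<And>V. V \<in> \<V> s \<Longrightarrow> Dec s V c \<subseteq> f -` V"
            using Dec_spec[OF sn] ck unfolding spec_def by blast
          show "\<And>V. V \<in> \<V> s \<Longrightarrow> \<forall>C\<in>r_components (Dec s V c) (\<rho> s). R_bounded C (D (\<rho> s) R')"
            using Dec_spec[OF sn] ck unfolding spec_def by blast
          show "\<forall>C\<in>r_components (Ob s c) r. R_bounded C (B s)" using Suc ck by simp
          show "0 \<le> B s" by (rule Bnn')
          show "0 \<le> D (\<rho> s) R'" using Dpos \<rho>0 R'0 by blast
          show "0 \<le> r" using r by simp
          show "B s + 2 * r \<le> \<rho> s" unfolding \<rho>_def by simp
          show "Sh s c = {x. \<exists>V\<in>\<V> s. (\<forall>v\<in>V. \<beta> c \<le> dist (f x) v) \<and> (\<exists>v\<in>V. dist (f x) v < \<beta> c + w)}"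
            unfolding Sh_def by simp
          show "(\<Union>V\<in>\<V> s. Dec s V c) = (\<Union>V\<in>\<V> s. Dec s V c)" by simp
          show "Ob (Suc s) c = (\<Union>V\<in>\<V> s. Dec s V c) \<union> (Ob s c - Sh s c)" by (rule OS)
        qed
        then show "\<forall>C\<in>r_components (Ob (Suc s) c) r. R_bounded C (B (Suc s))" using Bsuc by simp
      qed
    qed
    have shell_lt: "False" if H: "s < Suc n" "c < c'" "c' < k" "x \<in> Sh s c" "x \<in> Sh s c'" for s c c' x
    proof -
      obtain V where V: "V \<in> \<V> s" "\<forall>v\<in>V. \<beta> c \<le> dist (f x) v" "\<exists>v\<in>V. dist (f x) v < \<beta> c + w"
        using H(4) unfolding Sh_def by blast
      obtain V' where V': "V' \<in> \<V> s" "\<forall>v\<in>V'. \<beta> c' \<le> dist (f x) v" "\<exists>v\<in>V'. dist (f x) v < \<beta> c' + w"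
        using H(5) unfolding Sh_def by blast
      obtain v where v: "v \<in> V" "dist (f x) v < \<beta> c + w" using V by blast
      obtain v' where v': "v' \<in> V'" "dist (f x) v' < \<beta> c' + w" using V' by blast
      have "real c + 2 \<le> real c' + 1" using H(2) by simp
      then have "(real c + 2) * w \<le> (real c' + 1) * w" using w0 by (simp add: mult_right_mono)
      then have cc: "\<beta> c + w \<le> \<beta> c'" unfolding \<beta>_def by (simp add: algebra_simps)
      show False
      proof (cases "V = V'")
        case True
        then show False using V'(2) v cc by fastforce
      next
        case False
        have "real c' + 2 \<le> real k + 1" using H(3) by simp
        then have "(real c' + 2) * w \<le> (real k + 1) * w" using w0 by (simp add: mult_right_mono)
        then have b2: "\<beta> c' + w \<le> (real k + 1) * w" unfolding \<beta>_def by (simp add: algebra_simps)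
        have "dist v v' \<le> dist (f x) v + dist (f x) v'"
          using dist_triangle[of v v' "f x"] dist_commute[of v "f x"] by linarith
        then have "dist v v' < S" using v v' cc b2 Sw w0 by argo
        moreover have "S \<le> dist v v'" using V1 H(1) V(1) V'(1) False v(1) v'(1) unfolding r_disjoint_def by blast
        ultimately show False by simp
      qed
    qed
    have shell_uniq: "c = c'" if "s < Suc n" "c < k" "c' < k" "x \<in> Sh s c" "x \<in> Sh s c'" for s c c' x
      using shell_lt[OF that(1) _ that(3) that(4) that(5)] shell_lt[OF that(1) _ that(2) that(5) that(4)]
      by (meson linorder_neqE_nat)
    have inv2: "\<forall>x. f x \<in> (\<Union>i<s. \<Union>(\<V> i)) \<longrightarrow> n + 2 \<le> card {c. c < k \<and> x \<in> Ob s c} + s"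
      if "s \<le> Suc n" for s
      using that
    proof (induction s)
      case 0 then show ?case by simp
    next
      case (Suc s)
      have sn: "s < Suc n" using Suc.prems by simp
      show ?case
      proof (intro allI impI)
        fix x assume fx: "f x \<in> (\<Union>i<Suc s. \<Union>(\<V> i))"
        let ?A' = "{c. c < k \<and> x \<in> Ob (Suc s) c}"
        have finA': "finite ?A'" by (rule finite_subset[of _ "{..<k}"]) auto
        show "n + 2 \<le> card ?A' + Suc s"
        proof (cases "f x \<in> \<Union>(\<V> s)")
          case True
          then obtain V where V: "V \<in> \<V> s" "f x \<in> V" by blast
          have "k - m \<le> card {i. i < k \<and> x \<in> Dec s V i}"
            using Dec_spec[OF sn V(1)] V(2) unfolding spec_def by blast
          moreover have "{i. i < k \<and> x \<in> Dec s V i} \<subseteq> ?A'" using V(1) OS by auto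
          ultimately have "k - m \<le> card ?A'" using card_mono[OF finA'] by (meson order_trans)
          then show ?thesis using k by simp
        next
          case False
          then have "f x \<in> (\<Union>i<s. \<Union>(\<V> i))" using fx less_Suc_eq by auto
          then have IH: "n + 2 \<le> card {c. c < k \<and> x \<in> Ob s c} + s" using Suc by simp
          let ?A = "{c. c < k \<and> x \<in> Ob s c}"
          have "card ?A \<le> card ?A' + 1"
          proof (cases "\<exists>c0<k. x \<in> Sh s c0")
            case True
            then obtain c0 where c0: "c0 < k" "x \<in> Sh s c0" by blast
            have "?A \<subseteq> insert c0 ?A'"
            proof
              fix c assume "c \<in> ?A"
              then have "c < k" "x \<in> Ob s c" by auto
              show "c \<in> insert c0 ?A'"
              proof (cases "x \<in> Sh s c")
                case True then have "c = c0" using shell_uniq[OF sn \<open>c < k\<close> c0(1) True c0(2)] by simp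
                then show ?thesis by simp
              next
                case False then show ?thesis using \<open>c < k\<close> \<open>x \<in> Ob s c\<close> OS by auto
              qed
            qed
            then have "card ?A \<le> card (insert c0 ?A')" using finA' by (meson card_mono finite_insert)
            also have "\<dots> \<le> card ?A' + 1" using finA' by (simp add: card_insert_if)
            finally show ?thesis .
          next
            case False
            have "?A \<subseteq> ?A'"
            proof
              fix c assume "c \<in> ?A"
              then have "c < k" "x \<in> Ob s c" by auto
              moreover have "x \<notin> Sh s c" using False \<open>c < k\<close> by blast
              ultimately show "c \<in> ?A'" by (simp add: OS)
            qed
            then have "card ?A \<le> card ?A'" by (rule card_mono[OF finA'])
            then show ?thesis by simp
          qed
          then show ?thesis using IH by linarith
        qed
      qed
    qed
    have cov: "\<exists>c<k. x \<in> Ob (Suc n) c" for x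
    proof -
      have "f x \<in> (\<Union>i<Suc n. \<Union>(\<V> i))" using V2 by blast
      then have "n + 2 \<le> card {c. c < k \<and> x \<in> Ob (Suc n) c} + Suc n" using inv2[of "Suc n"] by simp
      then have "card {c. c < k \<and> x \<in> Ob (Suc n) c} \<noteq> 0" by linarith
      then have "{c. c < k \<and> x \<in> Ob (Suc n) c} \<noteq> {}" by force
      then show ?thesis by blast
    qed
    define \<U> where "\<U> = (\<lambda>c. r_components (Ob (Suc n) c) r)"
    show "\<exists>\<U> :: nat \<Rightarrow> 'a set set.
        (\<forall>i<Suc (m + n). r_disjoint (\<U> i) r \<and> (\<forall>U\<in>\<U> i. U \<subseteq> UNIV \<and> R_bounded U (Bseq c DY D k r (Suc n)))) \<and>
        UNIV \<subseteq> (\<Union>i<Suc (m + n). \<Union>(\<U> i))"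
    proof (intro exI[of _ \<U>] conjI allI impI ballI)
      fix i assume "i < Suc (m + n)"
      show "r_disjoint (\<U> i) r" unfolding \<U>_def by (rule components_disjoint)
    next
      fix i U assume "i < Suc (m + n)" "U \<in> \<U> i"
      then show "U \<subseteq> UNIV" by simp
    next
      fix i U assume "i < Suc (m + n)" "U \<in> \<U> i"
      then show "R_bounded U (Bseq c DY D k r (Suc n))"
        using inv1[of "Suc n"] k unfolding \<U>_def B_def by auto
    next
      show "UNIV \<subseteq> (\<Union>i<Suc (m + n). \<Union>(\<U> i))"
      proof
      fix x :: 'a assume "x \<in> UNIV"
      obtain c where c: "c < k" "x \<in> Ob (Suc n) c" using cov by blast
      have "x \<in> r_component (Ob (Suc n) c) r x" by (rule comp_self[OF c(2)])
      moreover have "r_component (Ob (Suc n) c) r x \<in> \<U> c" unfolding \<U>_def r_components_def using c(2) by blast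
      moreover have "c < Suc (m + n)" using c k by simp
      ultimately show "x \<in> (\<Union>i<Suc (m + n). \<Union>(\<U> i))" by blast
      qed
    qed
  qed

qed



lemma Bseq_lin_step:
  assumes c: "\<forall>r>0. c r = a1 * r + b1" and a1: "0 \<le> a1" "0 \<le> b1"
    and DY: "\<forall>r>0. DY r = a2 * r + b2" and a2: "0 \<le> a2" "0 \<le> b2"
    and D: "\<forall>r>0. \<forall>R>0. D r R = a * r + b * R + c0" and a: "0 \<le> a" "0 \<le> b"
    and IH: "\<forall>r>0. Bseq c DY D k r s = \<alpha> * r + \<gamma>" and al: "0 \<le> \<alpha>" "0 \<le> \<gamma>"
  shows "\<forall>r>0. Bseq c DY D k r (Suc s) =
     (a*(\<alpha>+2) + b*(a2+1)*(2*(real k+1))*(a1+1) + 2*\<alpha> + 2) * r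
     + (a*\<gamma> + b*((a2+1)*(2*(real k+1))*b1 + b2) + c0 + 2*\<gamma>)"
proof (intro allI impI)
  fix r :: real assume r: "0 < r"
  define K where "K = 2*(real k+1)"
  have K0: "0 < K" unfolding K_def by simp
  have S: "Sfun c k r = K * ((a1+1)*r + b1)" unfolding Sfun_def K_def using c r by (simp add: algebra_simps)
  have S0: "0 < Sfun c k r" unfolding S using K0 r a1 by (simp add: add_pos_nonneg)
  have R: "Rfun c DY k r = (a2+1) * (K * ((a1+1)*r + b1)) + b2"
    unfolding Rfun_def using DY S0 S by (simp add: algebra_simps)
  have "0 \<le> a2 * Sfun c k r" using a2 S0 by simp
  moreover have "Rfun c DY k r = a2 * Sfun c k r + b2 + Sfun c k r" unfolding Rfun_def using DY S0 by simp
  ultimately have R0: "0 < Rfun c DY k r" using S0 a2 by linarith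
  have "0 \<le> \<alpha> * r" using al r by simp
  then have rho0: "0 < \<alpha> * r + \<gamma> + 2*r" using al r by linarith
  have "Bseq c DY D k r (Suc s) = D (\<alpha> * r + \<gamma> + 2*r) (Rfun c DY k r) + 2*(\<alpha> * r + \<gamma>) + 2*r"
    using IH r by simp
  also have "\<dots> = a * (\<alpha> * r + \<gamma> + 2*r) + b * ((a2+1) * (K * ((a1+1)*r + b1)) + b2) + c0 + 2*(\<alpha> * r + \<gamma>) + 2*r"
    using D rho0 R0 R by simp
  finally show "Bseq c DY D k r (Suc s) =
     (a*(\<alpha>+2) + b*(a2+1)*(2*(real k+1))*(a1+1) + 2*\<alpha> + 2) * r
     + (a*\<gamma> + b*((a2+1)*(2*(real k+1))*b1 + b2) + c0 + 2*\<gamma>)"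
    unfolding K_def by (simp add: algebra_simps)
qed

lemma Bseq_linear:
  assumes "linear_fun1 c" "linear_fun1 DY" "linear_fun2 D"
  shows "linear_fun1 (\<lambda>r. Bseq c DY D k r s)"
proof -
  obtain a1 b1 where c: "0 \<le> b1" "0 \<le> a1" "\<forall>r>0. c r = a1 * r + b1" using assms(1) unfolding linear_fun1_def by blast
  obtain a2 b2 where DY: "0 \<le> b2" "0 \<le> a2" "\<forall>r>0. DY r = a2 * r + b2" using assms(2) unfolding linear_fun1_def by blast
  obtain a b c0 where D: "0 \<le> a" "0 \<le> b" "0 \<le> c0" "\<forall>r>0. \<forall>R>0. D r R = a * r + b * R + c0"
    using assms(3) unfolding linear_fun2_def by blast
  have "\<exists>\<alpha> \<gamma>. 0 \<le> \<alpha> \<and> 0 \<le> \<gamma> \<and> (\<forall>r>0. Bseq c DY D k r s = \<alpha> * r + \<gamma>)"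
  proof (induction s)
    case 0 then show ?case by (intro exI[of _ 0]) simp
  next
    case (Suc s)
    then obtain \<alpha> \<gamma> where al: "0 \<le> \<alpha>" "0 \<le> \<gamma>" "\<forall>r>0. Bseq c DY D k r s = \<alpha> * r + \<gamma>" by blast
    note st = Bseq_lin_step[OF c(3) c(2) c(1) DY(3) DY(2) DY(1) D(4) D(1) D(2) al(3) al(1) al(2)]
    show ?case
      by (rule exI, rule exI, rule conjI[OF _ conjI[OF _ st]])
         (use al c DY D in \<open>simp_all add: add_nonneg_nonneg mult_nonneg_nonneg\<close>)
  qed
  then show ?thesis unfolding linear_fun1_def by (metis)
qed

lemma Bseq_dilation:
  assumes "dilation_fun1 c" "dilation_fun1 DY" "dilation_fun2 D"
  shows "dilation_fun1 (\<lambda>r. Bseq c DY D k r (Suc s))"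
proof -
  obtain a1 where c: "0 < a1" "\<forall>r>0. c r = a1 * r + 0" using assms(1) unfolding dilation_fun1_def by auto
  obtain a2 where DY: "0 < a2" "\<forall>r>0. DY r = a2 * r + 0" using assms(2) unfolding dilation_fun1_def by auto
  obtain a b where D: "0 \<le> a" "0 \<le> b" "\<forall>r>0. \<forall>R>0. D r R = a * r + b * R + 0"
    using assms(3) unfolding dilation_fun2_def by auto
  have ex: "\<exists>\<alpha>. 0 \<le> \<alpha> \<and> (\<forall>r>0. Bseq c DY D k r s = \<alpha> * r + 0)" for s
  proof (induction s)
    case 0 then show ?case by (intro exI[of _ 0]) simp
  next
    case (Suc s)
    then obtain \<alpha> where al: "0 \<le> \<alpha>" "\<forall>r>0. Bseq c DY D k r s = \<alpha> * r + 0" by blast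
    note st = Bseq_lin_step[OF c(2) less_imp_le[OF c(1)] order_refl DY(2) less_imp_le[OF DY(1)] order_refl D(3) D(1) D(2) al(2) al(1) order_refl]
    have "0 \<le> a*(\<alpha>+2) + b*(a2+1)*(2*(real k+1))*(a1+1) + 2*\<alpha> + 2"
      using al c DY D by (simp add: add_nonneg_nonneg mult_nonneg_nonneg)
    then show ?case using st by (intro exI[of _ "a*(\<alpha>+2) + b*(a2+1)*(2*(real k+1))*(a1+1) + 2*\<alpha> + 2"]) simp
  qed
  obtain \<alpha> where al: "0 \<le> \<alpha>" "\<forall>r>0. Bseq c DY D k r s = \<alpha> * r + 0" using ex by blast
  note st = Bseq_lin_step[OF c(2) less_imp_le[OF c(1)] order_refl DY(2) less_imp_le[OF DY(1)] order_refl D(3) D(1) D(2) al(2) al(1) order_refl]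
  have "0 \<le> a*(\<alpha>+2)" using al D by simp
  moreover have "0 \<le> b*(a2+1)*(2*(real k+1))*(a1+1)" using c DY D by simp
  ultimately have pos: "0 < a*(\<alpha>+2) + b*(a2+1)*(2*(real k+1))*(a1+1) + 2*\<alpha> + 2"
    using al by linarith
  show ?thesis unfolding dilation_fun1_def
    using st pos c DY by (intro exI[of _ "a*(\<alpha>+2) + b*(a2+1)*(2*(real k+1))*(a1+1) + 2*\<alpha> + 2"]) (simp add: less_imp_le)
qed


theorem mainTheorem2:
  fixes f :: "'a::metric_space \<Rightarrow> 'b::metric_space"
    and c_f :: "real \<Rightarrow> real"
    and D_f :: "real \<Rightarrow> real \<Rightarrow> real"
    and m n k :: nat
  assumes "k = m + n + 1"
    and "large_scale_uniform f c_f"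
    and "asdim_le (UNIV :: 'b set) n"
    and "map_control_function f m k D_f"
  shows "asdim_le (UNIV :: 'a set) (m + n)
    \<and> ((\<exists>c D_Y D. large_scale_uniform f c \<and> linear_fun1 c
          \<and> dim_control_function (UNIV :: 'b set) n D_Y \<and> linear_fun1 D_Y
          \<and> map_control_function f m k D \<and> linear_fun2 D)
        \<longrightarrow> (\<exists>D_X. dim_control_function (UNIV :: 'a set) (k - 1) D_X \<and> linear_fun1 D_X))
    \<and> ((\<exists>c D_Y D. large_scale_uniform f c \<and> dilation_fun1 c
          \<and> dim_control_function (UNIV :: 'b set) n D_Y \<and> dilation_fun1 D_Y
          \<and> map_control_function f m k D \<and> dilation_fun2 D)
        \<longrightarrow> (\<exists>D_X. dim_control_function (UNIV :: 'a set) (k - 1) D_X \<and> dilation_fun1 D_X))"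
proof (intro conjI impI)
  obtain DY where DY: "dim_control_function (UNIV :: 'b set) n DY"
    using assms(3) unfolding asdim_le_def by blast
  show "asdim_le (UNIV :: 'a set) (m + n)"
    using main_construction[OF assms(1) assms(2) DY assms(4)] unfolding asdim_le_def by blast
next
  have km: "k - 1 = m + n" using assms(1) by simp
  assume "\<exists>c D_Y D. large_scale_uniform f c \<and> linear_fun1 c
          \<and> dim_control_function (UNIV :: 'b set) n D_Y \<and> linear_fun1 D_Y
          \<and> map_control_function f m k D \<and> linear_fun2 D"
  then obtain c D_Y D where h: "large_scale_uniform f c" "linear_fun1 c"
      "dim_control_function (UNIV :: 'b set) n D_Y" "linear_fun1 D_Y"
      "map_control_function f m k D" "linear_fun2 D" by blast
  show "\<exists>D_X. dim_control_function (UNIV :: 'a set) (k - 1) D_X \<and> linear_fun1 D_X"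
  proof -
    have 1: "dim_control_function (UNIV :: 'a set) (m + n) (\<lambda>r. Bseq c D_Y D k r (Suc n))"
      by (rule main_construction[OF assms(1) h(1) h(3) h(5)])
    have 2: "linear_fun1 (\<lambda>r. Bseq c D_Y D k r (Suc n))" by (rule Bseq_linear[OF h(2) h(4) h(6)])
    show ?thesis unfolding km using 1 2 by blast
  qed
next
  have km: "k - 1 = m + n" using assms(1) by simp
  assume "\<exists>c D_Y D. large_scale_uniform f c \<and> dilation_fun1 c
          \<and> dim_control_function (UNIV :: 'b set) n D_Y \<and> dilation_fun1 D_Y
          \<and> map_control_function f m k D \<and> dilation_fun2 D"
  then obtain c D_Y D where h: "large_scale_uniform f c" "dilation_fun1 c"
      "dim_control_function (UNIV :: 'b set) n D_Y" "dilation_fun1 D_Y"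
      "map_control_function f m k D" "dilation_fun2 D" by blast
  show "\<exists>D_X. dim_control_function (UNIV :: 'a set) (k - 1) D_X \<and> dilation_fun1 D_X"
  proof -
    have 1: "dim_control_function (UNIV :: 'a set) (m + n) (\<lambda>r. Bseq c D_Y D k r (Suc n))"
      by (rule main_construction[OF assms(1) h(1) h(3) h(5)])
    have 2: "dilation_fun1 (\<lambda>r. Bseq c D_Y D k r (Suc n))" by (rule Bseq_dilation[OF h(2) h(4) h(6)])
    show ?thesis unfolding km using 1 2 by blast
  qed
qed

end
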